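(* For every constant $\epsilon>0$, no deterministic online algorithm is $(\frac12+\epsilon)$-competitive for the maximum-weight online bipartite left-perfect matching problem under vertex arrivals with hard budget $k=4$, even when all edge weights are in $\{0,1\}$. That is, for every deterministic online algorithm for this problem and every constant $c\ge0$, there is an instance with all edge weights in $\{0,1\}$ on which the weight of the algorithm's final left-perfect matching is strictly less than $(\frac12+\epsilon)\cdot\mathsf{OPT}-c$, where $\mathsf{OPT}$ is the maximum weight of a left-perfect matching of $G$.
   Context: Problem: $G=(L\cup R,E)$ is a complete bipartite graph with $|L|\le|R|$ and nonnegative edge weights $w$. The algorithm initially knows $R$ (and $k=4$). Over $|L|$ timesteps the vertices of $L$ arrive one at a time, together with all incident edges and their weights. At the end of each timestep the algorithm must output a left-perfect matching of the revealed graph (every arrived vertex of $L$ matched). The new matching $M_2$ must be obtainable from the previous one $M_1$ (empty before the first timestep) by at most $4$ (re)assignments, the number of (re)assignments being the number of vertices of nonzero degree in $M_1\triangle M_2$; once a vertex is matched it must remain matched afterwards. An algorithm is $\alpha$-competitive if there is a constant $c\ge0$ such that on every instance the weight of its final matching is at least $\alpha\cdot\mathsf{OPT}-c$. *)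

theory Defs
  imports Complex_Main
begin

text \<open>The right side R is {0..<m} (known to the algorithm). The left vertices
  arrive as 0,1,...,n-1; arriving vertex i comes with its row of weights
  ws!i (a real list of length m, entry j = weight of edge (i,j)).
  A left-perfect matching of the revealed graph after t arrivals is a list M of
  length t of distinct right vertices (< m); left vertex i is matched to M!i.\<close>

definition lpm :: "nat \<Rightarrow> nat \<Rightarrow> nat list \<Rightarrow> bool" where
  "lpm m t M \<longleftrightarrow> length M = t \<and> distinct M \<and> (\<forall>j\<in>set M. j < m)"

definition medges :: "nat list \<Rightarrow> (nat \<times> nat) set" where
  "medges M = {(i, M ! i) | i. i < length M}"

text \<open>number of vertices of nonzero degree in the symmetric difference
  (left vertices and right vertices counted separately, as they are distinct vertices)\<close>
definition reassignments :: "nat list \<Rightarrow> nat list \<Rightarrow> nat" where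
  "reassignments M1 M2 =
     (let D = (medges M1 - medges M2) \<union> (medges M2 - medges M1)
      in card (fst ` D) + card (snd ` D))"

definition mweight :: "real list list \<Rightarrow> nat list \<Rightarrow> real" where
  "mweight ws M = (\<Sum>i<length M. ws ! i ! (M ! i))"

definition OPT :: "nat \<Rightarrow> real list list \<Rightarrow> real" where
  "OPT m ws = Max {mweight ws M | M. lpm m (length ws) M}"

text \<open>A deterministic online algorithm: given m (i.e. R) and the rows revealed so far,
  it outputs its current matching. Output after t steps (M_0 is empty):\<close>
definition out :: "(nat \<Rightarrow> real list list \<Rightarrow> nat list) \<Rightarrow> nat \<Rightarrow> real list list \<Rightarrow> nat \<Rightarrow> nat list" where
  "out alg m ws t = (if t = 0 then [] else alg m (take t ws))"

definition valid_instance :: "nat \<Rightarrow> real list list \<Rightarrow> bool" where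
  "valid_instance m ws \<longleftrightarrow> length ws \<le> m \<and>
     (\<forall>r\<in>set ws. length r = m \<and> (\<forall>x\<in>set r. 0 \<le> x))"

text \<open>Feasibility of the algorithm with hard budget k on every instance:
  each output is left-perfect, consecutive outputs differ by at most k (re)assignments,
  and a matched vertex stays matched (right side; left side follows from left-perfectness).\<close>
definition valid_alg :: "nat \<Rightarrow> (nat \<Rightarrow> real list list \<Rightarrow> nat list) \<Rightarrow> bool" where
  "valid_alg k alg \<longleftrightarrow> (\<forall>m ws. valid_instance m ws \<longrightarrow>
     (\<forall>t\<in>{1..length ws}.
        lpm m t (out alg m ws t) \<and>
        reassignments (out alg m ws (t - 1)) (out alg m ws t) \<le> k \<and>
        set (out alg m ws (t - 1)) \<subseteq> set (out alg m ws t)))"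

definition final_weight :: "(nat \<Rightarrow> real list list \<Rightarrow> nat list) \<Rightarrow> nat \<Rightarrow> real list list \<Rightarrow> real" where
  "final_weight alg m ws = mweight ws (out alg m ws (length ws))"

end

theory Submission
  imports Defs
begin


lemma medges_mem: "(a, b) \<in> medges M \<longleftrightarrow> a < length M \<and> b = M ! a"
  by (auto simp: medges_def)

lemma finite_medges: "finite (medges M)"
proof -
  have "medges M = (\<lambda>i. (i, M ! i)) ` {..<length M}" by (auto simp: medges_def)
  then show ?thesis by simp
qed

lemma key_step:
  assumes l2: "length M2 = Suc t" and d2: "distinct M2" and l1: "length M1 = t"
    and r: "reassignments M1 M2 \<le> 4" and i: "i < t" and ne: "M2 ! i \<noteq> M1 ! i"
  shows "M2 ! i \<notin> set M1"
proof
  assume "M2 ! i \<in> set M1"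
  then obtain i2 where i2: "i2 < t" "M1 ! i2 = M2 ! i" using l1 by (auto simp: in_set_conv_nth)
  have ii2: "i2 \<noteq> i" using i2 ne by auto
  have ne2: "M2 ! i2 \<noteq> M1 ! i2"
  proof
    assume "M2 ! i2 = M1 ! i2"
    then have "M2 ! i2 = M2 ! i" using i2 by simp
    then show False using d2 ii2 i i2 l2 by (simp add: nth_eq_iff_index_eq)
  qed
  define D where "D = (medges M1 - medges M2) \<union> (medges M2 - medges M1)"
  have fD: "finite D" unfolding D_def using finite_medges by auto
  have e1: "(i, M1 ! i) \<in> D" using i l1 l2 ne unfolding D_def by (auto simp: medges_mem)
  have e2: "(i, M2 ! i) \<in> D" using i l1 l2 ne unfolding D_def by (auto simp: medges_mem)
  have e3: "(i2, M1 ! i2) \<in> D" using i2 l1 l2 ne2 unfolding D_def by (auto simp: medges_mem)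
  have e4: "(t, M2 ! t) \<in> D" using l1 l2 unfolding D_def by (auto simp: medges_mem)
  have "{i, i2, t} \<subseteq> fst ` D" using e1 e3 e4 by force
  then have c1: "card {i, i2, t} \<le> card (fst ` D)" using fD by (intro card_mono) auto
  have "card {i, i2, t} = 3" using ii2 i i2 by auto
  have "{M1 ! i, M2 ! i} \<subseteq> snd ` D" using e1 e2 by force
  then have c2: "card {M1 ! i, M2 ! i} \<le> card (snd ` D)" using fD by (intro card_mono) auto
  have "card {M1 ! i, M2 ! i} = 2" using ne by auto
  have "reassignments M1 M2 = card (fst ` D) + card (snd ` D)"
    unfolding reassignments_def D_def Let_def by simp
  then show False using c1 c2 r \<open>card {i, i2, t} = 3\<close> \<open>card {M1 ! i, M2 ! i} = 2\<close> by linarith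
qed

definition ind :: "nat \<Rightarrow> nat set \<Rightarrow> real list" where
  "ind m S = map (\<lambda>j. if j \<in> S then 1 else 0) [0..<m]"

definition NPset :: "(nat \<Rightarrow> real list list \<Rightarrow> nat list) \<Rightarrow> nat \<Rightarrow> real list list \<Rightarrow> nat \<Rightarrow> nat set" where
  "NPset alg m R k = set (out alg m R k) - set (out alg m R (k - 2))"

definition Nset :: "(nat \<Rightarrow> real list list \<Rightarrow> nat list) \<Rightarrow> nat \<Rightarrow> real list list \<Rightarrow> nat set" where
  "Nset alg m R = (let t = length R in
     if t mod 4 = 2 then NPset alg m R t
     else if t mod 4 = 3 then
       (let p = out alg m R t ! (t - 1); NP = NPset alg m R (t - 1) in if p \<in> NP then {p} else NP)
     else {})"

fun rows :: "(nat \<Rightarrow> real list list \<Rightarrow> nat list) \<Rightarrow> nat \<Rightarrow> nat \<Rightarrow> real list list" where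
  "rows alg m 0 = []"
| "rows alg m (Suc t) = rows alg m t @ [ind m (Nset alg m (rows alg m t))]"

lemma length_rows[simp]: "length (rows alg m t) = t"
  by (induction t) auto

lemma take_rows: "t \<le> s \<Longrightarrow> take t (rows alg m s) = rows alg m t"
proof (induction s)
  case 0 then show ?case by simp
next
  case (Suc s)
  show ?case
  proof (cases "t = Suc s")
    case True then show ?thesis by simp
  next
    case False then have "t \<le> s" using Suc by simp
    then show ?thesis using Suc by simp
  qed
qed

lemma nth_rows: "i < s \<Longrightarrow> rows alg m s ! i = ind m (Nset alg m (rows alg m i))"
proof -
  assume "i < s"
  then have "take (Suc i) (rows alg m s) = rows alg m (Suc i)" by (intro take_rows) simp
  then have "take (Suc i) (rows alg m s) ! i = rows alg m (Suc i) ! i" by simp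
  then show ?thesis using \<open>i < s\<close> by (simp add: nth_append)
qed

lemma out_take: "k \<le> i \<Longrightarrow> out alg m (take i ws) k = out alg m ws k"
  by (simp add: out_def min_def)

lemma ind_nth: "j < m \<Longrightarrow> ind m S ! j = (if j \<in> S then 1 else 0)"
  by (simp add: ind_def)

lemma valid_rows: "n \<le> m \<Longrightarrow> valid_instance m (rows alg m n)"
  unfolding valid_instance_def
  by (auto simp: in_set_conv_nth nth_rows ind_def)

lemma rows01: "\<forall>r\<in>set (rows alg m n). \<forall>x\<in>set r. x \<in> {0, 1}"
  by (auto simp: in_set_conv_nth nth_rows ind_def)



locale adv =
  fixes alg :: "nat \<Rightarrow> real list list \<Rightarrow> nat list" and m J :: nat
  assumes va: "valid_alg 4 alg" and nm: "4 * J \<le> m"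
begin

definition "n = 4 * J"
definition "ws = rows alg m n"
abbreviation Ot where "Ot k \<equiv> out alg m ws k"

lemma len_ws[simp]: "length ws = n" by (simp add: ws_def)

lemma vi: "valid_instance m ws"
  unfolding ws_def using nm by (intro valid_rows) (simp add: n_def)

lemma stepv: "1 \<le> t \<Longrightarrow> t \<le> n \<Longrightarrow> lpm m t (Ot t) \<and> reassignments (Ot (t-1)) (Ot t) \<le> 4
   \<and> set (Ot (t-1)) \<subseteq> set (Ot t)"
  using va vi unfolding valid_alg_def by auto

lemma Ot0[simp]: "Ot 0 = []" by (simp add: out_def)

lemma lpm_all: "t \<le> n \<Longrightarrow> lpm m t (Ot t)"
  using stepv[of t] by (cases "t = 0") (auto simp: lpm_def)

lemma len_Ot[simp]: "t \<le> n \<Longrightarrow> length (Ot t) = t"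
  using lpm_all by (simp add: lpm_def)

lemma dist_Ot: "t \<le> n \<Longrightarrow> distinct (Ot t)"
  using lpm_all by (simp add: lpm_def)

lemma lt_m: "t \<le> n \<Longrightarrow> x \<in> set (Ot t) \<Longrightarrow> x < m"
  using lpm_all by (auto simp: lpm_def)

lemma card_S: "t \<le> n \<Longrightarrow> card (set (Ot t)) = t"
  using dist_Ot len_Ot distinct_card by metis

lemma mono: "a \<le> b \<Longrightarrow> b \<le> n \<Longrightarrow> set (Ot a) \<subseteq> set (Ot b)"
proof (induction b rule: dec_induct)
  case base then show ?case by simp
next
  case (step b)
  then have "set (Ot b) \<subseteq> set (Ot (Suc b))" using stepv[of "Suc b"] by simp
  with step show ?case by simp
qed

lemma moved: "Suc s \<le> n \<Longrightarrow> i < s \<Longrightarrow> Ot (Suc s) ! i \<noteq> Ot s ! i \<Longrightarrow> Ot (Suc s) ! i \<notin> set (Ot s)"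
  using stepv[of "Suc s"] by (intro key_step[of _ s]) (auto simp: lpm_def)

lemma stay: "Suc i \<le> s \<Longrightarrow> s \<le> n \<Longrightarrow> Ot s ! i = Ot (Suc i) ! i \<or> Ot s ! i \<notin> set (Ot (Suc i))"
proof (induction s rule: dec_induct)
  case base then show ?case by simp
next
  case (step s)
  show ?case
  proof (cases "Ot (Suc s) ! i = Ot s ! i")
    case True then show ?thesis using step by simp
  next
    case False
    then have "Ot (Suc s) ! i \<notin> set (Ot s)" using step by (intro moved) auto
    moreover have "set (Ot (Suc i)) \<subseteq> set (Ot s)" using step by (intro mono) auto
    ultimately show ?thesis by auto
  qed
qed

definition Ng :: "nat \<Rightarrow> nat set" where
  "Ng i = Nset alg m (rows alg m i)"

lemma Ng_eq: "i < n \<Longrightarrow> Ng i = (if i mod 4 = 2 then set (Ot i) - set (Ot (i-2))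
   else if i mod 4 = 3 then (let p = Ot i ! (i-1); NP = set (Ot (i-1)) - set (Ot (i-1-2)) in if p \<in> NP then {p} else NP)
   else {})"
proof -
  assume "i < n"
  then have r: "rows alg m i = take i ws" unfolding ws_def by (simp add: take_rows)
  show ?thesis unfolding Ng_def r Nset_def NPset_def Let_def
    using \<open>i < n\<close> by (simp add: out_take)
qed

lemma wt: "i < n \<Longrightarrow> j < m \<Longrightarrow> ws ! i ! j = (if j \<in> Ng i then 1 else 0)"
  unfolding ws_def Ng_def by (simp add: nth_rows ind_nth)

lemma m2: "(4*j+2) mod 4 = (2::nat)" "(4*j+3) mod 4 = (3::nat)" "(4*j+1) mod 4 = (1::nat)" "(4*j) mod 4 = (0::nat)"
  by presburger+

lemma N0: "j < J \<Longrightarrow> Ng (4*j) = {}"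
  using Ng_eq[of "4*j", unfolded m2] by (simp add: n_def)
lemma N1: "j < J \<Longrightarrow> Ng (4*j+1) = {}"
  using Ng_eq[of "4*j+1", unfolded m2] by (simp add: n_def)
lemma N2: "j < J \<Longrightarrow> Ng (4*j+2) = set (Ot (4*j+2)) - set (Ot (4*j))"
  using Ng_eq[of "4*j+2", unfolded m2] by (simp add: n_def)
lemma N3: "j < J \<Longrightarrow> Ng (4*j+3) = (let p = Ot (4*j+3) ! (4*j+2); NP = set (Ot (4*j+2)) - set (Ot (4*j))
   in if p \<in> NP then {p} else NP)"
proof -
  assume "j < J"
  then have "4*j+3 < n" by (simp add: n_def)
  from Ng_eq[OF this, unfolded m2] show ?thesis
    by (simp only: if_False if_True simp_thms) (simp add: Let_def)
qed

end


lemma sum_rounds: "(\<Sum>i<4*(J::nat). (g::nat\<Rightarrow>'a::comm_monoid_add) i) = (\<Sum>j<J. g (4*j) + g (4*j+1) + g (4*j+2) + g (4*j+3))"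
proof (induction J)
  case 0 then show ?case by simp
next
  case (Suc J)
  have e: "4 * Suc J = Suc (Suc (Suc (Suc (4*J))))" by simp
  show ?case unfolding e using Suc by (simp add: algebra_simps numeral_3_eq_3)
qed

definition two :: "nat set \<Rightarrow> nat \<times> nat" where
  "two X = (let L = sorted_list_of_set X in (L!0, L!1))"

lemma two: assumes "finite X" "card X = 2"
  shows "fst (two X) \<noteq> snd (two X) \<and> X = {fst (two X), snd (two X)}"
proof -
  define L where "L = sorted_list_of_set X"
  have l: "length L = 2" using assms by (simp add: L_def)
  have d: "distinct L" by (simp add: L_def)
  have s: "set L = X" using assms by (simp add: L_def)
  obtain a b where ab: "L = [a, b]" using l by (auto simp: length_Suc_conv numeral_2_eq_2)
  show ?thesis using d s ab by (auto simp: two_def L_def[symmetric])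
qed

context adv
begin

definition W where "W i = ws ! i ! (Ot n ! i)"

lemma fpos: "i < n \<Longrightarrow> Ot n ! i < m"
  using lt_m[of n] nth_mem[of i "Ot n"] by simp

lemma W_val: "i < n \<Longrightarrow> W i = (if Ot n ! i \<in> Ng i then 1 else 0)"
  unfolding W_def using fpos wt by simp

lemma round_alg: assumes j: "j < J"
  shows "W (4*j) + W (4*j+1) + W (4*j+2) + W (4*j+3) \<le> 1"
proof -
  have n3: "4*j+3 < n" using j by (simp add: n_def)
  have w0: "W (4*j) = 0" "W (4*j+1) = 0" using W_val N0 N1 j n3 by auto
  let ?f = "Ot n"
  let ?p = "Ot (4*j+3) ! (4*j+2)"
  let ?NP = "set (Ot (4*j+2)) - set (Ot (4*j))"
  have "W (4*j+2) + W (4*j+3) \<le> 1"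
  proof (cases "?f ! (4*j+2) \<in> Ng (4*j+2)")
    case False
    then have "W (4*j+2) = 0" using W_val n3 by simp
    moreover have "W (4*j+3) \<le> 1" using W_val n3 by simp
    ultimately show ?thesis by simp
  next
    case True
    then have inNP: "?f ! (4*j+2) \<in> ?NP" using N2 j by simp
    have "set (Ot (4*j+2)) \<subseteq> set (Ot (Suc (4*j+2)))" using n3 by (intro mono) auto
    have e: "Suc (4*j+2) = 4*j+3" by simp
    have "?f ! (4*j+2) = ?p"
      using stay[of "4*j+2" n, unfolded e] inNP n3 \<open>set (Ot (4*j+2)) \<subseteq> set (Ot (Suc (4*j+2)))\<close>[unfolded e] by auto
    then have pin: "?p \<in> ?NP" and fp: "?f ! (4*j+2) = ?p" using inNP by auto
    have NQ: "Ng (4*j+3) = {?p}" using N3[OF j] pin by (simp add: Let_def)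
    have "?f ! (4*j+3) \<noteq> ?p"
    proof
      assume "?f ! (4*j+3) = ?p"
      then have "?f ! (4*j+3) = ?f ! (4*j+2)" using fp by simp
      then show False using dist_Ot[of n] n3 by (simp add: nth_eq_iff_index_eq)
    qed
    then have "W (4*j+3) = 0" using W_val n3 NQ by simp
    moreover have "W (4*j+2) \<le> 1" using W_val n3 by simp
    ultimately show ?thesis by simp
  qed
  then show ?thesis using w0 by simp
qed

lemma alg_bound: "final_weight alg m ws \<le> J"
proof -
  have "final_weight alg m ws = (\<Sum>i<n. W i)"
    unfolding final_weight_def mweight_def W_def by simp
  also have "\<dots> = (\<Sum>j<J. W (4*j) + W (4*j+1) + W (4*j+2) + W (4*j+3))"
    unfolding n_def by (rule sum_rounds)
  also have "\<dots> \<le> (\<Sum>j<J. 1)" by (intro sum_mono round_alg) simp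
  finally show ?thesis by simp
qed

definition rl :: "nat \<Rightarrow> nat list" where
  "rl j = (let AB = two (set (Ot (4*j+2)) - set (Ot (4*j)));
               CD = two (set (Ot (4*j+4)) - set (Ot (4*j+2)));
               p = Ot (4*j+3) ! (4*j+2)
           in [fst CD, snd CD, if p = fst AB then snd AB else fst AB, if p = fst AB then fst AB else snd AB])"

lemma len_rl[simp]: "length (rl j) = 4" by (simp add: rl_def Let_def)

lemma card_diff: "a \<le> b \<Longrightarrow> b \<le> n \<Longrightarrow> card (set (Ot b) - set (Ot a)) = b - a"
  using card_S mono by (simp add: card_Diff_subset)

lemma set_rl: assumes j: "j < J" shows "set (rl j) = set (Ot (4*j+4)) - set (Ot (4*j))"
proof -
  have b: "4*j+4 \<le> n" using j by (simp add: n_def)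
  let ?X = "set (Ot (4*j+2)) - set (Ot (4*j))"
  let ?Y = "set (Ot (4*j+4)) - set (Ot (4*j+2))"
  have X: "?X = {fst (two ?X), snd (two ?X)}" using two[of ?X] card_diff[of "4*j" "4*j+2"] b by auto
  have Y: "?Y = {fst (two ?Y), snd (two ?Y)}" using two[of ?Y] card_diff[of "4*j+2" "4*j+4"] b by auto
  have "set (rl j) = ?Y \<union> ?X"
    by (subst X, subst Y) (auto simp: rl_def Let_def)
  also have "\<dots> = set (Ot (4*j+4)) - set (Ot (4*j))"
    using mono[of "4*j" "4*j+2"] mono[of "4*j+2" "4*j+4"] b by auto
  finally show ?thesis .
qed

definition "Ms = concat (map rl [0..<J])"

lemma len_concat: "length (concat (map rl [0..<K])) = 4*K"
  by (induction K) auto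

lemma nth_concat: "j < K \<Longrightarrow> r < 4 \<Longrightarrow> concat (map rl [0..<K]) ! (4*j+r) = rl j ! r"
proof (induction K)
  case 0 then show ?case by simp
next
  case (Suc K)
  show ?case
  proof (cases "j < K")
    case True then show ?thesis using Suc by (simp add: nth_append len_concat)
  next
    case False then have "j = K" using Suc by simp
    then show ?thesis using Suc by (simp add: nth_append len_concat)
  qed
qed

lemma set_concat: "K \<le> J \<Longrightarrow> set (concat (map rl [0..<K])) = set (Ot (4*K))"
proof (induction K)
  case 0 then show ?case by simp
next
  case (Suc K)
  then have "set (concat (map rl [0..<Suc K])) = set (Ot (4*K)) \<union> (set (Ot (4*K+4)) - set (Ot (4*K)))"
    using set_rl[of K] by simp
  also have "\<dots> = set (Ot (4*K+4))" using mono[of "4*K" "4*K+4"] Suc by (auto simp: n_def)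
  also have "4*K+4 = 4 * Suc K" by simp
  finally show ?case .
qed

lemma Ms_lpm: "lpm m n Ms"
proof -
  have l: "length Ms = n" by (simp add: Ms_def len_concat n_def)
  have s: "set Ms = set (Ot n)" unfolding Ms_def n_def by (rule set_concat) simp
  have "card (set Ms) = n" using s card_S by simp
  then have "distinct Ms" using l card_distinct by metis
  then show ?thesis using l s lt_m[of n] by (auto simp: lpm_def)
qed

lemma Ms_weight: "mweight ws Ms \<ge> 2 * J"
proof -
  have l: "length Ms = n" by (simp add: Ms_def len_concat n_def)
  have s: "set Ms = set (Ot n)" unfolding Ms_def n_def by (rule set_concat) simp
  define g where "g i = ws ! i ! (Ms ! i)" for i
  have g01: "i < n \<Longrightarrow> 0 \<le> g i" for i
  proof -
    assume i: "i < n"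
    then have "Ms ! i < m" using l s lt_m[of n] nth_mem[of i Ms] by auto
    then show ?thesis using wt i by (simp add: g_def)
  qed
  have rnd: "j < J \<Longrightarrow> g (4*j) + g (4*j+1) + g (4*j+2) + g (4*j+3) \<ge> 2" for j
  proof -
    assume j: "j < J"
    have n3: "4*j+3 < n" using j by (simp add: n_def)
    have b: "4*j+4 \<le> n" using j by (simp add: n_def)
    let ?X = "set (Ot (4*j+2)) - set (Ot (4*j))"
    let ?p = "Ot (4*j+3) ! (4*j+2)"
    have X: "fst (two ?X) \<noteq> snd (two ?X) \<and> ?X = {fst (two ?X), snd (two ?X)}"
      using two[of ?X] card_diff[of "4*j" "4*j+2"] b by auto
    have M2: "Ms ! (4*j+2) = (if ?p = fst (two ?X) then snd (two ?X) else fst (two ?X))"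
      using nth_concat[of j J 2] j by (simp add: Ms_def rl_def Let_def)
    have M3: "Ms ! (4*j+3) = (if ?p = fst (two ?X) then fst (two ?X) else snd (two ?X))"
      using nth_concat[of j J 3] j by (simp add: Ms_def rl_def Let_def)
    have lt: "Ms ! i < m" if "i < n" for i using that l s lt_m[of n] nth_mem[of i Ms] by auto
    have in2: "Ms ! (4*j+2) \<in> Ng (4*j+2)" using M2 X N2[OF j] by auto
    have in3: "Ms ! (4*j+3) \<in> Ng (4*j+3)"
    proof (cases "?p \<in> ?X")
      case True
      then have "Ng (4*j+3) = {?p}" using N3[OF j] by (simp only: Let_def if_True)
      moreover have "Ms ! (4*j+3) = ?p" using M3 X True by auto
      ultimately show ?thesis by simp
    next
      case False
      then have "Ng (4*j+3) = ?X" using N3[OF j] by (simp only: Let_def if_False)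
      then show ?thesis using M3 X by auto
    qed
    have "g (4*j+2) = 1" using in2 wt[of "4*j+2"] lt n3 by (simp add: g_def)
    moreover have "g (4*j+3) = 1" using in3 wt[of "4*j+3"] lt n3 by (simp add: g_def)
    moreover have "g (4*j) \<ge> 0" "g (4*j+1) \<ge> 0" using g01 n3 by auto
    ultimately show ?thesis by simp
  qed
  have "mweight ws Ms = (\<Sum>i<n. g i)" unfolding mweight_def g_def l by simp
  also have "\<dots> = (\<Sum>j<J. g (4*j) + g (4*j+1) + g (4*j+2) + g (4*j+3))"
    unfolding n_def by (rule sum_rounds)
  also have "\<dots> \<ge> (\<Sum>j<J. 2)" by (intro sum_mono rnd) simp
  finally show ?thesis by simp
qed

lemma OPT_bound: "OPT m ws \<ge> 2 * J"
proof -
  have fin: "finite {mweight ws M | M. lpm m (length ws) M}"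
  proof -
    have "{M. lpm m (length ws) M} \<subseteq> {xs. set xs \<subseteq> {..<m} \<and> length xs = length ws}"
      by (auto simp: lpm_def)
    then have "finite {M. lpm m (length ws) M}"
      by (rule finite_subset) (rule finite_lists_length_eq, simp)
    then show ?thesis by (simp add: setcompr_eq_image)
  qed
  have "mweight ws Ms \<in> {mweight ws M | M. lpm m (length ws) M}" using Ms_lpm by auto
  then have "mweight ws Ms \<le> OPT m ws" unfolding OPT_def using fin by (intro Max_ge)
  then show ?thesis using Ms_weight by simp
qed

end


theorem theorem4:
  fixes \<epsilon> :: real
  assumes "\<epsilon> > 0"
  shows "\<forall>alg. valid_alg 4 alg \<longrightarrow>
           (\<forall>c::real. c \<ge> 0 \<longrightarrow>
              (\<exists>m ws. valid_instance m ws \<and> (\<forall>r\<in>set ws. \<forall>x\<in>set r. x \<in> {0, 1}) \<and>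
                 final_weight alg m ws < (1/2 + \<epsilon>) * OPT m ws - c))"
proof (intro allI impI)
  fix alg and c :: real
  assume va: "valid_alg 4 alg" and c: "c \<ge> 0"
  define J where "J = nat \<lceil>c / \<epsilon>\<rceil> + 1"
  have "real J = real (nat \<lceil>c / \<epsilon>\<rceil>) + 1" by (simp add: J_def)
  moreover have "real (nat \<lceil>c / \<epsilon>\<rceil>) \<ge> c / \<epsilon>"
    by (rule real_nat_ceiling_ge)
  ultimately have Jgt: "real J > c / \<epsilon>" by simp
  then have eJ: "\<epsilon> * real J > c" using assms by (simp add: field_simps)
  interpret A: adv alg "4*J" J using va by unfold_locales auto
  have vi: "valid_instance (4*J) A.ws" by (rule A.vi)
  have w01: "\<forall>r\<in>set A.ws. \<forall>x\<in>set r. x \<in> {0, 1}" unfolding A.ws_def by (rule rows01)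
  have fa: "final_weight alg (4*J) A.ws \<le> J" by (rule A.alg_bound)
  have op: "OPT (4*J) A.ws \<ge> 2 * J" by (rule A.OPT_bound)
  have "(1/2 + \<epsilon>) * OPT (4*J) A.ws \<ge> (1/2 + \<epsilon>) * (2 * J)"
    using op assms by (intro mult_left_mono) auto
  moreover have "(1/2 + \<epsilon>) * (2 * real J) = real J + 2 * (\<epsilon> * real J)" by (simp add: algebra_simps)
  ultimately have "(1/2 + \<epsilon>) * OPT (4*J) A.ws - c > J" using eJ c by linarith
  then have "final_weight alg (4*J) A.ws < (1/2 + \<epsilon>) * OPT (4*J) A.ws - c" using fa by simp
  then show "\<exists>m ws. valid_instance m ws \<and> (\<forall>r\<in>set ws. \<forall>x\<in>set r. x \<in> {0, 1}) \<and>
                 final_weight alg m ws < (1/2 + \<epsilon>) * OPT m ws - c"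
    using vi w01 by blast
qed

end
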